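(* Let $A \subset C(X)$ be a uniform algebra, let $\theta : A \to M_n(\mathbb{C})$ be a continuous unital homomorphism, and let $\alpha : A \to A$ be an antilinear contraction. Define a linear map $\theta_\alpha : A \to M_n(\mathbb{C})$ by $$\theta_\alpha(f) := \tfrac12\bigl(\theta(f) + \theta(\alpha(f))^*\bigr)\quad (f \in A).$$ If $\|\theta_\alpha\| \le 1$, then $\|\theta\| \le 1+\sqrt2$. Moreover, the constant $1+\sqrt2$ is sharp: it cannot be replaced by any smaller constant in this statement (valid for all uniform algebras $A$, all $n$, all such $\theta$ and $\alpha$).
   Context: A uniform algebra is a norm-closed subalgebra $A$ of $C(X)$, for $X$ a compact Hausdorff space, that contains the constant functions. It carries the supremum norm. $M_n(\mathbb{C})$ carries the operator norm, and $\|\cdot\|$ of a linear map is its operator norm. Homomorphisms are unital. A map $\alpha$ is antilinear if $\alpha(\lambda f + g) = \overline{\lambda}\alpha(f) + \alpha(g)$. It is a contraction if $\|\alpha(f)\| \le \|f\|$ for all $f$. *)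

theory Defs
  imports "HOL-Analysis.Analysis" "Jordan_Normal_Form.Schur_Decomposition"
begin

text \<open>Elements of C(X) are represented as functions on the ambient type that vanish off X.\<close>

definition supnorm :: "'a set \<Rightarrow> ('a \<Rightarrow> complex) \<Rightarrow> real" where
  "supnorm X f = (if X = {} then 0 else Sup ((\<lambda>x. cmod (f x)) ` X))"

definition const_on :: "'a set \<Rightarrow> complex \<Rightarrow> ('a \<Rightarrow> complex)" where
  "const_on X c = (\<lambda>x. if x \<in> X then c else 0)"

text \<open>A uniform algebra: a sup-norm closed subalgebra of C(X), X compact Hausdorff
  (Hausdorff comes from the type class), containing the constants.\<close>
definition uniform_algebra :: "'a::t2_space set \<Rightarrow> ('a \<Rightarrow> complex) set \<Rightarrow> bool" where
  "uniform_algebra X A \<longleftrightarrow>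
     compact X \<and>
     (\<forall>f\<in>A. continuous_on X f \<and> (\<forall>x. x \<notin> X \<longrightarrow> f x = 0)) \<and>
     (\<forall>c. const_on X c \<in> A) \<and>
     (\<forall>f\<in>A. \<forall>g\<in>A. (\<lambda>x. f x + g x) \<in> A) \<and>
     (\<forall>f\<in>A. \<forall>g\<in>A. (\<lambda>x. f x * g x) \<in> A) \<and>
     (\<forall>c. \<forall>f\<in>A. (\<lambda>x. c * f x) \<in> A) \<and>
     (\<forall>F g. (\<forall>k. F k \<in> A) \<and> continuous_on X g \<and> (\<forall>x. x \<notin> X \<longrightarrow> g x = 0) \<and>
        (\<lambda>k. supnorm X (\<lambda>x. F k x - g x)) \<longlonglongrightarrow> 0 \<longrightarrow> g \<in> A)"

definition cvec_norm :: "complex vec \<Rightarrow> real" where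
  "cvec_norm v = sqrt (\<Sum>i<dim_vec v. (cmod (v $ i))\<^sup>2)"

definition mat_opnorm :: "complex mat \<Rightarrow> real" where
  "mat_opnorm M = Sup {cvec_norm (M *\<^sub>v v) | v. v \<in> carrier_vec (dim_col M) \<and> cvec_norm v \<le> 1}"

definition map_norm :: "'a set \<Rightarrow> ('a \<Rightarrow> complex) set \<Rightarrow> (('a \<Rightarrow> complex) \<Rightarrow> complex mat) \<Rightarrow> real" where
  "map_norm X A T = Sup {mat_opnorm (T f) | f. f \<in> A \<and> supnorm X f \<le> 1}"

definition is_linear_map :: "('a \<Rightarrow> complex) set \<Rightarrow> nat \<Rightarrow> (('a \<Rightarrow> complex) \<Rightarrow> complex mat) \<Rightarrow> bool" where
  "is_linear_map A n T \<longleftrightarrow> (\<forall>f\<in>A. T f \<in> carrier_mat n n) \<and>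
     (\<forall>c. \<forall>f\<in>A. \<forall>g\<in>A. T (\<lambda>x. c * f x + g x) = c \<cdot>\<^sub>m T f + T g)"

definition is_unital_hom :: "'a set \<Rightarrow> ('a \<Rightarrow> complex) set \<Rightarrow> nat \<Rightarrow> (('a \<Rightarrow> complex) \<Rightarrow> complex mat) \<Rightarrow> bool" where
  "is_unital_hom X A n T \<longleftrightarrow> is_linear_map A n T \<and>
     (\<forall>f\<in>A. \<forall>g\<in>A. T (\<lambda>x. f x * g x) = T f * T g) \<and>
     T (const_on X 1) = 1\<^sub>m n"

definition is_continuous_map :: "'a set \<Rightarrow> ('a \<Rightarrow> complex) set \<Rightarrow> (('a \<Rightarrow> complex) \<Rightarrow> complex mat) \<Rightarrow> bool" where
  "is_continuous_map X A T \<longleftrightarrow> (\<forall>f\<in>A. \<forall>F. (\<forall>k. F k \<in> A) \<and>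
      (\<lambda>k. supnorm X (\<lambda>x. F k x - f x)) \<longlonglongrightarrow> 0 \<longrightarrow>
      (\<lambda>k. mat_opnorm (T (F k) - T f)) \<longlonglongrightarrow> 0)"

definition antilinear_contraction :: "'a set \<Rightarrow> ('a \<Rightarrow> complex) set \<Rightarrow> (('a \<Rightarrow> complex) \<Rightarrow> ('a \<Rightarrow> complex)) \<Rightarrow> bool" where
  "antilinear_contraction X A \<alpha> \<longleftrightarrow> (\<forall>f\<in>A. \<alpha> f \<in> A) \<and>
     (\<forall>c. \<forall>f\<in>A. \<forall>g\<in>A. \<alpha> (\<lambda>x. c * f x + g x) = (\<lambda>x. cnj c * \<alpha> f x + \<alpha> g x)) \<and>
     (\<forall>f\<in>A. supnorm X (\<alpha> f) \<le> supnorm X f)"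

definition theta_alpha :: "(('a \<Rightarrow> complex) \<Rightarrow> complex mat) \<Rightarrow> (('a \<Rightarrow> complex) \<Rightarrow> ('a \<Rightarrow> complex)) \<Rightarrow> ('a \<Rightarrow> complex) \<Rightarrow> complex mat" where
  "theta_alpha T \<alpha> f = (1/2) \<cdot>\<^sub>m (T f + mat_adjoint (T (\<alpha> f)))"

end

theory Submission
  imports Defs
begin


no_notation vec_nth (infixl \<open>$\<close> 90)

lemma cvec_norm_L2: "cvec_norm v = L2_set (\<lambda>i. cmod (v $ i)) {..<dim_vec v}"
  by (simp add: cvec_norm_def L2_set_def)

lemma cvec_norm_nonneg: "0 \<le> cvec_norm v"
  by (simp add: cvec_norm_def sum_nonneg)

lemma cvec_norm_smult: "cvec_norm (c \<cdot>\<^sub>v v) = cmod c * cvec_norm v"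
proof -
  have "(\<Sum>i<dim_vec v. (cmod ((c \<cdot>\<^sub>v v) $ i))\<^sup>2) = (cmod c)\<^sup>2 * (\<Sum>i<dim_vec v. (cmod (v $ i))\<^sup>2)"
    by (simp add: sum_distrib_left norm_mult power_mult_distrib)
  then show ?thesis by (simp add: cvec_norm_def real_sqrt_mult)
qed

lemma cvec_norm_add: assumes "dim_vec u = dim_vec w"
  shows "cvec_norm (u + w) \<le> cvec_norm u + cvec_norm w"
proof -
  have "cvec_norm (u + w) = L2_set (\<lambda>i. cmod ((u + w) $ i)) {..<dim_vec w}"
    by (simp add: cvec_norm_L2)
  also have "\<dots> \<le> L2_set (\<lambda>i. cmod (u $ i) + cmod (w $ i)) {..<dim_vec w}"
    by (rule L2_set_mono) (auto simp: norm_triangle_ineq)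
  also have "\<dots> \<le> cvec_norm u + cvec_norm w"
    using L2_set_triangle_ineq assms by (simp add: cvec_norm_L2)
  finally show ?thesis .
qed

lemma cvec_norm_minus: assumes "dim_vec u = dim_vec w"
  shows "cvec_norm (u - w) \<le> cvec_norm u + cvec_norm w"
proof -
  have "cvec_norm (u - w) = L2_set (\<lambda>i. cmod ((u - w) $ i)) {..<dim_vec w}"
    by (simp add: cvec_norm_L2)
  also have "\<dots> \<le> L2_set (\<lambda>i. cmod (u $ i) + cmod (w $ i)) {..<dim_vec w}"
    by (rule L2_set_mono) (auto simp: norm_triangle_ineq4)
  also have "\<dots> \<le> cvec_norm u + cvec_norm w"
    using L2_set_triangle_ineq assms by (simp add: cvec_norm_L2)
  finally show ?thesis .
qed

lemma cvec_inner_self: "v \<bullet>c v = complex_of_real ((cvec_norm v)\<^sup>2)"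
proof -
  have 1: "(cvec_norm v)\<^sup>2 = (\<Sum>i<dim_vec v. (cmod (v $ i))\<^sup>2)"
    by (simp add: cvec_norm_def sum_nonneg)
  have "v \<bullet>c v = (\<Sum>i<dim_vec v. complex_of_real ((cmod (v $ i))\<^sup>2))"
    by (simp add: scalar_prod_def lessThan_atLeast0 complex_norm_square[symmetric])
  then show ?thesis unfolding 1 of_real_sum by simp
qed

lemma cvec_cs: assumes "dim_vec u = dim_vec w"
  shows "cmod (u \<bullet>c w) \<le> cvec_norm u * cvec_norm w"
proof -
  have "cmod (u \<bullet>c w) = cmod (\<Sum>i<dim_vec w. u $ i * cnj (w $ i))"
    by (simp add: scalar_prod_def lessThan_atLeast0)
  also have "\<dots> \<le> (\<Sum>i<dim_vec w. cmod (u $ i * cnj (w $ i)))"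
    by (rule norm_sum)
  also have "\<dots> = (\<Sum>i<dim_vec w. \<bar>cmod (u $ i)\<bar> * \<bar>cmod (w $ i)\<bar>)"
    by (simp add: norm_mult)
  also have "\<dots> \<le> cvec_norm u * cvec_norm w"
    using L2_set_mult_ineq[of "\<lambda>i. cmod (u $ i)" "\<lambda>i. cmod (w $ i)" "{..<dim_vec w}"] assms
    by (simp add: cvec_norm_L2)
  finally show ?thesis .
qed

lemma cvec_norm_comp: assumes "i < dim_vec v" shows "cmod (v $ i) \<le> cvec_norm v"
  using member_le_L2_set[of "{..<dim_vec v}" i "\<lambda>i. cmod (v $ i)"] assms
  by (simp add: cvec_norm_L2)

lemma cvec_norm_zero: assumes "cvec_norm v = 0" shows "v = 0\<^sub>v (dim_vec v)"
proof (rule eq_vecI)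
  fix i assume "i < dim_vec (0\<^sub>v (dim_vec v))"
  then have "i < dim_vec v" by simp
  then have "cmod (v $ i) \<le> 0" using cvec_norm_comp assms by metis
  then show "v $ i = 0\<^sub>v (dim_vec v) $ i" using \<open>i < dim_vec v\<close> by simp
qed simp


lemma mat_vec_bound: assumes M: "M \<in> carrier_mat n m" and v: "v \<in> carrier_vec m"
  shows "cvec_norm (M *\<^sub>v v) \<le> (\<Sum>i<n. \<Sum>j<m. cmod (M $$ (i,j))) * cvec_norm v"
proof -
  have "cvec_norm (M *\<^sub>v v) = L2_set (\<lambda>i. cmod ((M *\<^sub>v v) $ i)) {..<n}"
    using M by (simp add: cvec_norm_L2)
  also have "\<dots> \<le> (\<Sum>i<n. \<bar>cmod ((M *\<^sub>v v) $ i)\<bar>)" by (rule L2_set_le_sum_abs)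
  also have "\<dots> \<le> (\<Sum>i<n. (\<Sum>j<m. cmod (M $$ (i,j))) * cvec_norm v)"
  proof (rule sum_mono)
    fix i assume i: "i \<in> {..<n}"
    have "(M *\<^sub>v v) $ i = (\<Sum>j<m. M $$ (i,j) * v $ j)"
      using M v i by (simp add: scalar_prod_def lessThan_atLeast0)
    then have "cmod ((M *\<^sub>v v) $ i) \<le> (\<Sum>j<m. cmod (M $$ (i,j) * v $ j))"
      by (simp add: norm_sum)
    also have "\<dots> \<le> (\<Sum>j<m. cmod (M $$ (i,j)) * cvec_norm v)"
      by (rule sum_mono) (use v in \<open>auto simp: norm_mult intro!: mult_left_mono cvec_norm_comp\<close>)
    finally show "\<bar>cmod ((M *\<^sub>v v) $ i)\<bar> \<le> (\<Sum>j<m. cmod (M $$ (i,j))) * cvec_norm v"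
      by (simp add: sum_distrib_right)
  qed
  also have "\<dots> = (\<Sum>i<n. \<Sum>j<m. cmod (M $$ (i,j))) * cvec_norm v"
    by (simp add: sum_distrib_right)
  finally show ?thesis .
qed

lemma opnorm_bdd: "bdd_above {cvec_norm (M *\<^sub>v v) | v. v \<in> carrier_vec (dim_col M) \<and> cvec_norm v \<le> 1}"
proof -
  let ?B = "(\<Sum>i<dim_row M. \<Sum>j<dim_col M. cmod (M $$ (i,j)))"
  have B0: "0 \<le> ?B" by (simp add: sum_nonneg)
  show ?thesis
  proof (rule bdd_aboveI)
    fix x assume "x \<in> {cvec_norm (M *\<^sub>v v) | v. v \<in> carrier_vec (dim_col M) \<and> cvec_norm v \<le> 1}"
    then obtain v where v: "v \<in> carrier_vec (dim_col M)" "cvec_norm v \<le> 1" and x: "x = cvec_norm (M *\<^sub>v v)"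
      by blast
    have "x \<le> ?B * cvec_norm v" unfolding x by (rule mat_vec_bound[OF _ v(1)]) auto
    also have "\<dots> \<le> ?B" using B0 v(2) by (simp add: mult_left_le)
    finally show "x \<le> ?B" .
  qed
qed

lemma opnorm_upper: assumes "v \<in> carrier_vec (dim_col M)" "cvec_norm v \<le> 1"
  shows "cvec_norm (M *\<^sub>v v) \<le> mat_opnorm M"
  unfolding mat_opnorm_def by (rule cSup_upper[OF _ opnorm_bdd]) (use assms in blast)

lemma opnorm_nonneg: "0 \<le> mat_opnorm M"
proof -
  have "cvec_norm (M *\<^sub>v 0\<^sub>v (dim_col M)) \<le> mat_opnorm M"
    by (rule opnorm_upper) (auto simp: cvec_norm_def)
  moreover have "M *\<^sub>v 0\<^sub>v (dim_col M) = 0\<^sub>v (dim_row M)" by auto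
  ultimately show ?thesis by (simp add: cvec_norm_def)
qed

lemma opnorm_apply: assumes v: "v \<in> carrier_vec (dim_col M)"
  shows "cvec_norm (M *\<^sub>v v) \<le> mat_opnorm M * cvec_norm v"
proof (cases "cvec_norm v = 0")
  case True
  then have "v = 0\<^sub>v (dim_col M)" using cvec_norm_zero v by fastforce
  then have "M *\<^sub>v v = 0\<^sub>v (dim_row M)" by auto
  then show ?thesis using True by (simp add: cvec_norm_def)
next
  case False
  let ?r = "cvec_norm v"
  have r: "0 < ?r" using False cvec_norm_nonneg[of v] by linarith
  let ?w = "complex_of_real (1 / ?r) \<cdot>\<^sub>v v"
  have w: "?w \<in> carrier_vec (dim_col M)" using v by simp
  have nw: "cvec_norm ?w = 1" using r by (simp add: cvec_norm_smult norm_divide)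
  have "M *\<^sub>v ?w = complex_of_real (1 / ?r) \<cdot>\<^sub>v (M *\<^sub>v v)"
    by (rule mult_mat_vec[of M "dim_row M" "dim_col M"]) (use v in auto)
  then have "cvec_norm (M *\<^sub>v ?w) = cvec_norm (M *\<^sub>v v) / ?r"
    using r by (simp add: cvec_norm_smult norm_divide)
  moreover have "cvec_norm (M *\<^sub>v ?w) \<le> mat_opnorm M" using opnorm_upper[OF w] nw by simp
  ultimately have "cvec_norm (M *\<^sub>v v) / ?r \<le> mat_opnorm M" by simp
  then show ?thesis using r by (simp add: pos_divide_le_eq)
qed

lemma opnorm_le: assumes "\<And>v. v \<in> carrier_vec (dim_col M) \<Longrightarrow> cvec_norm v \<le> 1 \<Longrightarrow> cvec_norm (M *\<^sub>v v) \<le> c"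
  shows "mat_opnorm M \<le> c"
  unfolding mat_opnorm_def
proof (rule cSup_least)
  show "{cvec_norm (M *\<^sub>v v) | v. v \<in> carrier_vec (dim_col M) \<and> cvec_norm v \<le> 1} \<noteq> {}"
    by (rule ex_in_conv[THEN iffD1], rule exI[of _ "cvec_norm (M *\<^sub>v 0\<^sub>v (dim_col M))"])
       (auto simp: cvec_norm_def intro!: exI[of _ "0\<^sub>v (dim_col M)"])
qed (use assms in blast)

lemma opnorm_le2: assumes "0 \<le> c" "\<And>v. v \<in> carrier_vec (dim_col M) \<Longrightarrow> cvec_norm (M *\<^sub>v v) \<le> c * cvec_norm v"
  shows "mat_opnorm M \<le> c"
proof (rule opnorm_le)
  fix v assume "v \<in> carrier_vec (dim_col M)" "cvec_norm v \<le> 1"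
  then show "cvec_norm (M *\<^sub>v v) \<le> c" using assms(2)[of v] mult_left_le[of "cvec_norm v" c] assms(1) by linarith
qed



lemma adj_carrier: "(A :: complex mat) \<in> carrier_mat n m \<Longrightarrow> mat_adjoint A \<in> carrier_mat m n"
  unfolding mat_adjoint_def mat_of_rows_def carrier_mat_def
  by (simp only: dim_row_mat dim_col_mat length_map cols_length mem_Collect_eq)

lemma adj_index: "(A :: complex mat) \<in> carrier_mat n m \<Longrightarrow> i < m \<Longrightarrow> j < n \<Longrightarrow> mat_adjoint A $$ (i,j) = cnj (A $$ (j,i))"
  unfolding mat_adjoint_def mat_of_rows_def
  by (subst index_mat) simp_all

lemma adj_adj: assumes A: "(A :: complex mat) \<in> carrier_mat n m" shows "mat_adjoint (mat_adjoint A) = A"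
proof -
  have 1: "mat_adjoint A \<in> carrier_mat m n" by (rule adj_carrier[OF A])
  have 2: "mat_adjoint (mat_adjoint A) \<in> carrier_mat n m" by (rule adj_carrier[OF 1])
  show ?thesis
  proof (rule eq_matI)
    fix i j assume "i < dim_row A" "j < dim_col A"
    then have "i < n" "j < m" using A by auto
    then show "mat_adjoint (mat_adjoint A) $$ (i,j) = A $$ (i,j)"
      using adj_index[OF 1, of i j] adj_index[OF A, of j i] by simp
  qed (use 2 A in auto)
qed

lemma adj_add: assumes A: "(A :: complex mat) \<in> carrier_mat n m" and B: "B \<in> carrier_mat n m"
  shows "mat_adjoint (A + B) = mat_adjoint A + mat_adjoint B"
proof -
  have AB: "A + B \<in> carrier_mat n m" using A B by simp
  have 1: "mat_adjoint A \<in> carrier_mat m n" by (rule adj_carrier[OF A])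
  have 2: "mat_adjoint B \<in> carrier_mat m n" by (rule adj_carrier[OF B])
  have 3: "mat_adjoint (A + B) \<in> carrier_mat m n" by (rule adj_carrier[OF AB])
  show ?thesis
  proof (rule eq_matI)
    fix i j assume "i < dim_row (mat_adjoint A + mat_adjoint B)" "j < dim_col (mat_adjoint A + mat_adjoint B)"
    then have ij: "i < m" "j < n" using 1 2 by auto
    then have "(mat_adjoint A + mat_adjoint B) $$ (i,j) = mat_adjoint A $$ (i,j) + mat_adjoint B $$ (i,j)"
      using 1 2 by simp
    also have "\<dots> = cnj (A $$ (j,i)) + cnj (B $$ (j,i))" using adj_index[OF A] adj_index[OF B] ij by simp
    also have "\<dots> = cnj ((A + B) $$ (j,i))" using A B ij by simp
    also have "\<dots> = mat_adjoint (A + B) $$ (i,j)" using adj_index[OF AB] ij by simp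
    finally show "mat_adjoint (A + B) $$ (i,j) = (mat_adjoint A + mat_adjoint B) $$ (i,j)" by simp
  qed (use 1 2 3 in auto)
qed

lemma adj_inner: assumes A: "(A :: complex mat) \<in> carrier_mat n m" and u: "u \<in> carrier_vec m" and w: "w \<in> carrier_vec n"
  shows "(A *\<^sub>v u) \<bullet>c w = u \<bullet>c (mat_adjoint A *\<^sub>v w)"
proof -
  have "(A *\<^sub>v u) \<bullet>c w = (\<Sum>i<n. \<Sum>j<m. A $$ (i,j) * u $ j * cnj (w $ i))"
    using A u w by (simp add: scalar_prod_def lessThan_atLeast0 sum_distrib_right)
  also have "\<dots> = (\<Sum>j<m. \<Sum>i<n. A $$ (i,j) * u $ j * cnj (w $ i))" by (rule sum.swap)
  also have "\<dots> = (\<Sum>j<m. u $ j * cnj (\<Sum>i<n. cnj (A $$ (i,j)) * w $ i))"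
  proof (rule sum.cong[OF refl])
    fix j assume "j \<in> {..<m}"
    have "u $ j * cnj (\<Sum>i<n. cnj (A $$ (i,j)) * w $ i) = u $ j * (\<Sum>i<n. A $$ (i,j) * cnj (w $ i))"
      by simp
    also have "\<dots> = (\<Sum>i<n. A $$ (i,j) * u $ j * cnj (w $ i))"
      by (simp add: sum_distrib_left ac_simps)
    finally show "(\<Sum>i<n. A $$ (i,j) * u $ j * cnj (w $ i)) = u $ j * cnj (\<Sum>i<n. cnj (A $$ (i,j)) * w $ i)"
      by simp
  qed
  also have "\<dots> = u \<bullet>c (mat_adjoint A *\<^sub>v w)"
  proof -
    have AH: "mat_adjoint A \<in> carrier_mat m n" by (rule adj_carrier[OF A])
    have "\<And>j. j < m \<Longrightarrow> (mat_adjoint A *\<^sub>v w) $ j = (\<Sum>i<n. cnj (A $$ (i,j)) * w $ i)"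
      using AH w by (simp add: scalar_prod_def lessThan_atLeast0 adj_index[OF A])
    then show ?thesis using AH u
      by (simp add: scalar_prod_def lessThan_atLeast0)
  qed
  finally show ?thesis .
qed

lemma adj_bound: assumes A: "(A :: complex mat) \<in> carrier_mat n m" and c: "\<And>u. u \<in> carrier_vec m \<Longrightarrow> cvec_norm (A *\<^sub>v u) \<le> c * cvec_norm u"
  and w: "w \<in> carrier_vec n" and c0: "0 \<le> c"
  shows "cvec_norm (mat_adjoint A *\<^sub>v w) \<le> c * cvec_norm w"
proof -
  let ?z = "mat_adjoint A *\<^sub>v w"
  have z: "?z \<in> carrier_vec m" using adj_carrier[OF A] w by simp
  have "complex_of_real ((cvec_norm ?z)\<^sup>2) = ?z \<bullet>c ?z" by (simp add: cvec_inner_self)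
  also have "\<dots> = conjugate (?z \<bullet>c ?z)" by (simp add: cvec_inner_self)
  also have "?z \<bullet>c ?z = (A *\<^sub>v ?z) \<bullet>c w" using adj_inner[OF A z w] by simp
  finally have "complex_of_real ((cvec_norm ?z)\<^sup>2) = cnj ((A *\<^sub>v ?z) \<bullet>c w)" by simp
  then have "(cvec_norm ?z)\<^sup>2 = cmod ((A *\<^sub>v ?z) \<bullet>c w)"
    by (metis abs_norm_cancel complex_mod_cnj norm_of_real norm_power power2_abs)
  also have "\<dots> \<le> cvec_norm (A *\<^sub>v ?z) * cvec_norm w" using A w z by (intro cvec_cs) auto
  also have "\<dots> \<le> c * cvec_norm ?z * cvec_norm w" by (rule mult_right_mono[OF c[OF z] cvec_norm_nonneg])
  finally have *: "cvec_norm ?z * cvec_norm ?z \<le> (c * cvec_norm w) * cvec_norm ?z"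
    by (simp add: power2_eq_square mult_ac)
  show ?thesis
  proof (cases "cvec_norm ?z = 0")
    case True
    then show ?thesis using c0 by (simp add: cvec_norm_nonneg)
  next
    case False
    then have "0 < cvec_norm ?z" using cvec_norm_nonneg[of ?z] by linarith
    then show ?thesis using * by simp
  qed
qed



lemma smult_mat_vec: assumes "(A :: complex mat) \<in> carrier_mat n m" "v \<in> carrier_vec m"
  shows "(c \<cdot>\<^sub>m A) *\<^sub>v v = c \<cdot>\<^sub>v (A *\<^sub>v v)"
proof (rule eq_vecI)
  fix i assume "i < dim_vec (c \<cdot>\<^sub>v (A *\<^sub>v v))"
  then have i: "i < n" using assms by simp
  have "((c \<cdot>\<^sub>m A) *\<^sub>v v) $ i = (\<Sum>j<m. c * A $$ (i,j) * v $ j)"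
    using assms i by (simp add: scalar_prod_def lessThan_atLeast0)
  also have "\<dots> = c * (\<Sum>j<m. A $$ (i,j) * v $ j)" by (simp add: sum_distrib_left mult.assoc)
  also have "\<dots> = (c \<cdot>\<^sub>v (A *\<^sub>v v)) $ i"
    using assms i by (simp add: scalar_prod_def lessThan_atLeast0)
  finally show "((c \<cdot>\<^sub>m A) *\<^sub>v v) $ i = (c \<cdot>\<^sub>v (A *\<^sub>v v)) $ i" .
qed (use assms in simp)

lemma opnorm_smult_ge: assumes A: "(A :: complex mat) \<in> carrier_mat n m" and c: "0 < c"
  shows "c * mat_opnorm A \<le> mat_opnorm (complex_of_real c \<cdot>\<^sub>m A)"
proof -
  have "mat_opnorm A \<le> mat_opnorm (complex_of_real c \<cdot>\<^sub>m A) / c"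
  proof (rule opnorm_le)
    fix v assume v: "v \<in> carrier_vec (dim_col A)" "cvec_norm v \<le> 1"
    have vm: "v \<in> carrier_vec (dim_col (complex_of_real c \<cdot>\<^sub>m A))" using v by simp
    have "cvec_norm ((complex_of_real c \<cdot>\<^sub>m A) *\<^sub>v v) = c * cvec_norm (A *\<^sub>v v)"
      using smult_mat_vec[OF A, of v] v A c by (simp add: cvec_norm_smult)
    moreover have "cvec_norm ((complex_of_real c \<cdot>\<^sub>m A) *\<^sub>v v) \<le> mat_opnorm (complex_of_real c \<cdot>\<^sub>m A)"
      by (rule opnorm_upper[OF vm v(2)])
    ultimately show "cvec_norm (A *\<^sub>v v) \<le> mat_opnorm (complex_of_real c \<cdot>\<^sub>m A) / c"
      using c by (simp add: pos_le_divide_eq mult.commute)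
  qed
  then have "mat_opnorm A * c \<le> mat_opnorm (complex_of_real c \<cdot>\<^sub>m A)" using c by (simp add: pos_le_divide_eq)
  then show ?thesis by (metis mult.commute)
qed

lemma ua_parts: assumes "uniform_algebra X A"
  shows "compact X" "\<forall>f\<in>A. continuous_on X f \<and> (\<forall>x. x \<notin> X \<longrightarrow> f x = 0)"
    "\<forall>c. const_on X c \<in> A" "\<forall>f\<in>A. \<forall>g\<in>A. (\<lambda>x. f x + g x) \<in> A"
    "\<forall>f\<in>A. \<forall>g\<in>A. (\<lambda>x. f x * g x) \<in> A" "\<forall>c. \<forall>f\<in>A. (\<lambda>x. c * f x) \<in> A"
  using assms unfolding uniform_algebra_def
  apply -
  apply (elim conjE, assumption)+
  done

lemma ua_cont: "uniform_algebra X A \<Longrightarrow> f \<in> A \<Longrightarrow> continuous_on X f"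
  using ua_parts(2) by blast

lemma ua_bdd: assumes "uniform_algebra X A" "f \<in> A"
  shows "bdd_above ((\<lambda>x. cmod (f x)) ` X)"
proof -
  have "compact X" using ua_parts(1)[OF assms(1)] .
  moreover have "continuous_on X (\<lambda>x. cmod (f x))"
    using ua_cont[OF assms] by (intro continuous_on_norm)
  ultimately have "compact ((\<lambda>x. cmod (f x)) ` X)" by (rule compact_continuous_image[rotated])
  then show ?thesis by (intro bounded_imp_bdd_above compact_imp_bounded)
qed

lemma supnorm_upper: assumes "uniform_algebra X A" "f \<in> A" "x \<in> X"
  shows "cmod (f x) \<le> supnorm X f"
proof -
  have "X \<noteq> {}" using assms by auto
  then show ?thesis unfolding supnorm_def using cSup_upper[OF _ ua_bdd[OF assms(1,2)]] assms(3) by simp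
qed

lemma supnorm_le: assumes "\<And>x. x \<in> X \<Longrightarrow> cmod (f x) \<le> c" "0 \<le> c"
  shows "supnorm X f \<le> c"
proof (cases "X = {}")
  case True then show ?thesis using assms by (simp add: supnorm_def)
next
  case False
  then show ?thesis unfolding supnorm_def using assms by (auto intro!: cSup_least)
qed

lemma supnorm_nonneg: assumes "uniform_algebra X A" "f \<in> A" shows "0 \<le> supnorm X f"
proof (cases "X = {}")
  case True then show ?thesis by (simp add: supnorm_def)
next
  case False
  then obtain x where "x \<in> X" by blast
  then show ?thesis using supnorm_upper[OF assms \<open>x \<in> X\<close>] norm_ge_zero[of "f x"] by linarith
qed

lemma ua_zero: "uniform_algebra X A \<Longrightarrow> (\<lambda>x. 0) \<in> A"
proof -
  assume "uniform_algebra X A"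
  then have "const_on X 0 \<in> A" using ua_parts(3) by blast
  moreover have "const_on X 0 = (\<lambda>x. 0)" by (simp add: const_on_def fun_eq_iff)
  ultimately show ?thesis by simp
qed

lemma ua_scale: "uniform_algebra X A \<Longrightarrow> f \<in> A \<Longrightarrow> (\<lambda>x. c * f x) \<in> A"
  using ua_parts(6) by blast

lemma ua_mult: "uniform_algebra X A \<Longrightarrow> f \<in> A \<Longrightarrow> g \<in> A \<Longrightarrow> (\<lambda>x. f x * g x) \<in> A"
  using ua_parts(5) by blast

lemma lin_carrier: "is_linear_map A n T \<Longrightarrow> f \<in> A \<Longrightarrow> T f \<in> carrier_mat n n"
  unfolding is_linear_map_def by blast

lemma lin_eq: assumes "is_linear_map A n T" "f \<in> A" "g \<in> A"
  shows "T (\<lambda>x. c * f x + g x) = c \<cdot>\<^sub>m T f + T g"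
proof -
  have H: "\<forall>c. \<forall>f\<in>A. \<forall>g\<in>A. T (\<lambda>x. c * f x + g x) = c \<cdot>\<^sub>m T f + T g"
    using assms(1) unfolding is_linear_map_def by (rule conjunct2)
  show ?thesis by (rule bspec[OF bspec[OF spec[OF H, of c] assms(2)] assms(3)])
qed

lemma cont_apply: "is_continuous_map X A T \<Longrightarrow> f \<in> A \<Longrightarrow> (\<And>k. F k \<in> A) \<Longrightarrow>
   (\<lambda>k. supnorm X (\<lambda>x. F k x - f x)) \<longlonglongrightarrow> 0 \<Longrightarrow> (\<lambda>k. mat_opnorm (T (F k) - T f)) \<longlonglongrightarrow> 0"
proof -
  assume H: "is_continuous_map X A T" and f: "f \<in> A" and F: "\<And>k. F k \<in> A"
    and L: "(\<lambda>k. supnorm X (\<lambda>x. F k x - f x)) \<longlonglongrightarrow> 0"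
  have "\<forall>F. (\<forall>k. F k \<in> A) \<and> (\<lambda>k. supnorm X (\<lambda>x. F k x - f x)) \<longlonglongrightarrow> 0 \<longrightarrow>
      (\<lambda>k. mat_opnorm (T (F k) - T f)) \<longlonglongrightarrow> 0"
    using H f unfolding is_continuous_map_def by (rule bspec)
  then show ?thesis using F L by blast
qed

lemma lin_zero: assumes ua: "uniform_algebra X A" and T: "is_linear_map A n T"
  shows "T (\<lambda>x. 0) = 0\<^sub>m n n"
proof -
  have z: "(\<lambda>x. 0) \<in> A" by (rule ua_zero[OF ua])
  have "T (\<lambda>x. (-1) * (\<lambda>x. 0) x + (\<lambda>x. 0) x) = (-1) \<cdot>\<^sub>m T (\<lambda>x. 0) + T (\<lambda>x. 0)"
    by (rule lin_eq[OF T z z])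
  moreover have "(\<lambda>x. (-1) * (\<lambda>x. 0) x + (\<lambda>x. 0) x) = (\<lambda>x::'a. 0::complex)" by simp
  moreover have "(-1) \<cdot>\<^sub>m T (\<lambda>x. 0) + T (\<lambda>x. 0) = 0\<^sub>m n n"
    using lin_carrier[OF T z] by (intro eq_matI) auto
  ultimately show ?thesis by simp
qed

lemma lin_scale: assumes ua: "uniform_algebra X A" and T: "is_linear_map A n T" and f: "f \<in> A"
  shows "T (\<lambda>x. c * f x) = c \<cdot>\<^sub>m T f"
proof -
  have z: "(\<lambda>x. 0) \<in> A" by (rule ua_zero[OF ua])
  have "T (\<lambda>x. c * f x + (\<lambda>x. 0) x) = c \<cdot>\<^sub>m T f + T (\<lambda>x. 0)"
    by (rule lin_eq[OF T f z])
  then show ?thesis using lin_zero[OF ua T] lin_carrier[OF T f] by simp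
qed

lemma lin_bounded: assumes ua: "uniform_algebra X A" and T: "is_linear_map A n T"
  and cont: "is_continuous_map X A T"
  shows "bdd_above {mat_opnorm (T f) | f. f \<in> A \<and> supnorm X f \<le> 1}"
proof (rule ccontr)
  assume nb: "\<not> ?thesis"
  have "\<forall>k::nat. \<exists>f. f \<in> A \<and> supnorm X f \<le> 1 \<and> (real k + 1)\<^sup>2 < mat_opnorm (T f)"
  proof
    fix k :: nat
    show "\<exists>f. f \<in> A \<and> supnorm X f \<le> 1 \<and> (real k + 1)\<^sup>2 < mat_opnorm (T f)"
    proof (rule ccontr)
      assume "\<not> ?thesis"
      then have "\<forall>y \<in> {mat_opnorm (T f) | f. f \<in> A \<and> supnorm X f \<le> 1}. y \<le> (real k + 1)\<^sup>2"
        by (auto simp: not_less)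
      then show False using nb unfolding bdd_above_def by blast
    qed
  qed
  then obtain F where F: "\<And>k. F k \<in> A" "\<And>k. supnorm X (F k) \<le> 1"
    "\<And>k. (real k + 1)\<^sup>2 < mat_opnorm (T (F k))"
    by metis
  define G where "G k = (\<lambda>x. complex_of_real (inverse (real (Suc k))) * F k x)" for k
  have GA: "G k \<in> A" for k unfolding G_def by (rule ua_scale[OF ua F(1)])
  have z: "(\<lambda>x. 0) \<in> A" by (rule ua_zero[OF ua])
  have s: "supnorm X (\<lambda>x. G k x - 0) \<le> inverse (real (Suc k))" for k
  proof (rule supnorm_le)
    fix x assume x: "x \<in> X"
    have "cmod (F k x) \<le> 1" using supnorm_upper[OF ua F(1)[of k] x] F(2)[of k] by linarith
    have "cmod (G k x - 0) = inverse (real (Suc k)) * cmod (F k x)"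
      unfolding G_def diff_zero norm_mult norm_of_real by simp
    also have "\<dots> \<le> inverse (real (Suc k)) * 1"
      by (rule mult_left_mono) (use \<open>cmod (F k x) \<le> 1\<close> in auto)
    finally show "cmod (G k x - 0) \<le> inverse (real (Suc k))" by simp
  qed simp
  have s0: "0 \<le> supnorm X (\<lambda>x. G k x - 0)" for k
    using supnorm_nonneg[OF ua GA[of k]] by simp
  have "(\<lambda>k. supnorm X (\<lambda>x. G k x - (\<lambda>x. 0) x)) \<longlonglongrightarrow> 0"
    using s s0 by (intro tendsto_sandwich[OF _ _ tendsto_const LIMSEQ_inverse_real_of_nat]) auto
  then have lim: "(\<lambda>k. mat_opnorm (T (G k) - T (\<lambda>x. 0))) \<longlonglongrightarrow> 0"
    by (rule cont_apply[OF cont z GA])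
  have big: "1 \<le> mat_opnorm (T (G k) - T (\<lambda>x. 0))" for k
  proof -
    have TG: "T (G k) = complex_of_real (inverse (real (Suc k))) \<cdot>\<^sub>m T (F k)"
      unfolding G_def by (rule lin_scale[OF ua T F(1)])
    have "T (G k) - T (\<lambda>x. 0) = T (G k)"
      using lin_zero[OF ua T] lin_carrier[OF T GA[of k]] by (intro eq_matI) auto
    then have "mat_opnorm (T (G k) - T (\<lambda>x. 0)) \<ge> inverse (real (Suc k)) * mat_opnorm (T (F k))"
      using TG opnorm_smult_ge[OF lin_carrier[OF T F(1)], of "inverse (real (Suc k))" k] by simp
    moreover have "inverse (real (Suc k)) * mat_opnorm (T (F k)) \<ge> inverse (real (Suc k)) * (real k + 1)\<^sup>2"
      using F(3)[of k] by (intro mult_left_mono) auto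
    moreover have "inverse (real (Suc k)) * (real k + 1)\<^sup>2 = real k + 1"
      by (simp add: power2_eq_square field_simps)
    ultimately show ?thesis by linarith
  qed
  from lim have "\<forall>\<^sub>F k in sequentially. mat_opnorm (T (G k) - T (\<lambda>x. 0)) < 1"
    by (rule order_tendstoD) simp
  then obtain N where "\<And>k. k \<ge> N \<Longrightarrow> mat_opnorm (T (G k) - T (\<lambda>x. 0)) < 1"
    unfolding eventually_sequentially by blast
  then show False using big[of N] by fastforce
qed



lemma vec_add_diff: "(u :: complex vec) \<in> carrier_vec n \<Longrightarrow> w \<in> carrier_vec n \<Longrightarrow> (u + w) - w = u"
  by (intro eq_vecI) auto

lemma real_of_inner: assumes "complex_of_real a = b" "0 \<le> a" shows "a = cmod b"
  using assms by auto

lemma key_matrix: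
  fixes T G H :: "complex mat"
  assumes T: "T \<in> carrier_mat n n" and G: "G \<in> carrier_mat n n"
  and HTGT: "H = T * G * T"
  and Tb: "\<And>v. v \<in> carrier_vec n \<Longrightarrow> cvec_norm (T *\<^sub>v v) \<le> M * cvec_norm v"
  and Hb: "\<And>v. v \<in> carrier_vec n \<Longrightarrow> cvec_norm (H *\<^sub>v v) \<le> M * cvec_norm v"
  and Sb: "\<And>v. v \<in> carrier_vec n \<Longrightarrow> cvec_norm ((T + mat_adjoint G) *\<^sub>v v) \<le> 2 * cvec_norm v"
  and M0: "0 \<le> M"
  and x: "x \<in> carrier_vec n" and x1: "cvec_norm x \<le> 1"
  shows "(cvec_norm (T *\<^sub>v x)) ^ 4 \<le> 2 * M ^ 3 + M\<^sup>2"
proof -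
  define TH where "TH = mat_adjoint T"
  define S where "S = T + mat_adjoint G"
  define SH where "SH = mat_adjoint S"
  have TH: "TH \<in> carrier_mat n n" unfolding TH_def by (rule adj_carrier[OF T])
  have GH: "mat_adjoint G \<in> carrier_mat n n" by (rule adj_carrier[OF G])
  have S: "S \<in> carrier_mat n n" unfolding S_def using T GH by simp
  have SH_eq: "SH = TH + G" unfolding SH_def S_def TH_def
    using adj_add[OF T GH] adj_adj[OF G] by simp
  have SH: "SH \<in> carrier_mat n n" unfolding SH_eq using TH G by simp
  have H: "H \<in> carrier_mat n n" unfolding HTGT using T G by simp
  have THb: "cvec_norm (TH *\<^sub>v v) \<le> M * cvec_norm v" if "v \<in> carrier_vec n" for v
    unfolding TH_def by (rule adj_bound[OF T Tb that M0])
  have SHb: "cvec_norm (SH *\<^sub>v v) \<le> 2 * cvec_norm v" if "v \<in> carrier_vec n" for v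
    unfolding SH_def by (rule adj_bound[OF S _ that]) (use Sb S_def in auto)
  define y where "y = T *\<^sub>v x"
  define z where "z = TH *\<^sub>v y"
  define w where "w = T *\<^sub>v z"
  define q where "q = TH *\<^sub>v w"
  have y: "y \<in> carrier_vec n" unfolding y_def using T x by simp
  have z: "z \<in> carrier_vec n" unfolding z_def using TH y by simp
  have w: "w \<in> carrier_vec n" unfolding w_def using T z by simp
  have q: "q \<in> carrier_vec n" unfolding q_def using TH w by simp
  have nx: "0 \<le> cvec_norm x" by (rule cvec_norm_nonneg)
  have ny: "0 \<le> cvec_norm y" by (rule cvec_norm_nonneg)
  have nz: "0 \<le> cvec_norm z" by (rule cvec_norm_nonneg)
  have nq: "0 \<le> cvec_norm q" by (rule cvec_norm_nonneg)
  have "complex_of_real ((cvec_norm y)\<^sup>2) = y \<bullet>c y" by (simp add: cvec_inner_self)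
  also have "\<dots> = x \<bullet>c z" unfolding z_def TH_def using adj_inner[OF T x y] y_def by simp
  finally have "(cvec_norm y)\<^sup>2 = cmod (x \<bullet>c z)" by (rule real_of_inner) simp
  also have "\<dots> \<le> cvec_norm x * cvec_norm z" using x z by (intro cvec_cs) simp
  also have "\<dots> \<le> 1 * cvec_norm z" by (rule mult_right_mono[OF x1 nz])
  finally have s1: "(cvec_norm y)\<^sup>2 \<le> cvec_norm z" by simp
  have "complex_of_real ((cvec_norm z)\<^sup>2) = z \<bullet>c z" by (simp add: cvec_inner_self)
  also have "\<dots> = y \<bullet>c (mat_adjoint TH *\<^sub>v z)" unfolding z_def by (rule adj_inner[OF TH y z[unfolded z_def]])
  also have "mat_adjoint TH = T" unfolding TH_def by (rule adj_adj[OF T])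
  also have "y \<bullet>c (T *\<^sub>v z) = x \<bullet>c q" unfolding y_def q_def w_def TH_def by (rule adj_inner[OF T x w[unfolded w_def]])
  finally have "(cvec_norm z)\<^sup>2 = cmod (x \<bullet>c q)" by (rule real_of_inner) simp
  also have "\<dots> \<le> cvec_norm x * cvec_norm q" using x q by (intro cvec_cs) simp
  also have "\<dots> \<le> 1 * cvec_norm q" by (rule mult_right_mono[OF x1 nq])
  finally have s2: "(cvec_norm z)\<^sup>2 \<le> cvec_norm q" by simp
  define a where "a = TH *\<^sub>v (T *\<^sub>v (SH *\<^sub>v y))"
  define b where "b = TH *\<^sub>v (H *\<^sub>v x)"
  have Gy: "G *\<^sub>v y \<in> carrier_vec n" using G y by simp
  have THy: "TH *\<^sub>v y \<in> carrier_vec n" using TH y by simp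
  have "SH *\<^sub>v y = TH *\<^sub>v y + G *\<^sub>v y" unfolding SH_eq by (rule add_mult_distrib_mat_vec[OF TH G y])
  then have "T *\<^sub>v (SH *\<^sub>v y) = T *\<^sub>v (TH *\<^sub>v y) + T *\<^sub>v (G *\<^sub>v y)"
    using mult_add_distrib_mat_vec[OF T THy Gy] by simp
  also have "T *\<^sub>v (G *\<^sub>v y) = H *\<^sub>v x"
  proof -
    have "H *\<^sub>v x = (T * G) *\<^sub>v (T *\<^sub>v x)" unfolding HTGT
      by (rule assoc_mult_mat_vec[of _ n n]) (use T G x in auto)
    also have "\<dots> = T *\<^sub>v (G *\<^sub>v (T *\<^sub>v x))"
      by (rule assoc_mult_mat_vec[of _ n n]) (use T G x in auto)
    finally show ?thesis unfolding y_def by simp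
  qed
  finally have "T *\<^sub>v (SH *\<^sub>v y) = w + H *\<^sub>v x" unfolding w_def z_def .
  then have "a = q + b" unfolding a_def b_def q_def
    using mult_add_distrib_mat_vec[OF TH w, of "H *\<^sub>v x"] H x by simp
  then have qab: "q = a - b" using vec_add_diff[OF q, of b] b_def TH H x by simp
  have b: "b \<in> carrier_vec n" unfolding b_def using TH H x by simp
  have a: "a \<in> carrier_vec n" unfolding a_def using TH T SH y by simp
  have "cvec_norm a \<le> M * cvec_norm (T *\<^sub>v (SH *\<^sub>v y))" unfolding a_def
    by (rule THb) (use T SH y in simp)
  also have "\<dots> \<le> M * (M * cvec_norm (SH *\<^sub>v y))"
    by (rule mult_left_mono[OF Tb M0]) (use SH y in simp)
  also have "\<dots> \<le> M * (M * (2 * cvec_norm y))"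
    by (intro mult_left_mono[OF _ M0] SHb y)
  also have "\<dots> \<le> M * (M * (2 * (M * cvec_norm x)))"
    unfolding y_def using Tb[OF x] by (intro mult_left_mono[OF _ M0]) simp_all
  also have "\<dots> \<le> M * (M * (2 * (M * 1)))"
    using mult_left_mono[OF x1 M0] by (intro mult_left_mono[OF _ M0]) simp_all
  finally have na: "cvec_norm a \<le> 2 * M ^ 3" by (simp add: power3_eq_cube)
  have "cvec_norm b \<le> M * cvec_norm (H *\<^sub>v x)" unfolding b_def
    by (rule THb) (use H x in simp)
  also have "\<dots> \<le> M * (M * cvec_norm x)" by (intro mult_left_mono[OF Hb M0] x)
  also have "\<dots> \<le> M * (M * 1)" using mult_left_mono[OF x1 M0] by (intro mult_left_mono[OF _ M0]) (simp_all add: x1)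
  finally have nb: "cvec_norm b \<le> M\<^sup>2" by (simp add: power2_eq_square)
  have "cvec_norm q \<le> cvec_norm a + cvec_norm b" unfolding qab
    by (rule cvec_norm_minus) (use a b in simp)
  then have s3: "cvec_norm q \<le> 2 * M ^ 3 + M\<^sup>2" using na nb by linarith
  have "(cvec_norm y) ^ 4 = ((cvec_norm y)\<^sup>2)\<^sup>2" by simp
  also have "\<dots> \<le> (cvec_norm z)\<^sup>2" by (rule power_mono[OF s1]) simp
  also have "\<dots> \<le> 2 * M ^ 3 + M\<^sup>2" using s2 s3 by linarith
  finally show ?thesis unfolding y_def .
qed



lemma final_ineq: assumes M0: "0 \<le> (M::real)" and h: "M ^ 4 \<le> 2 * M ^ 3 + M\<^sup>2"
  shows "M \<le> 1 + sqrt 2"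
proof (cases "M = 0")
  case True then show ?thesis by simp
next
  case False
  then have Mp: "0 < M\<^sup>2" using M0 by simp
  have "M\<^sup>2 * M\<^sup>2 \<le> M\<^sup>2 * (2 * M + 1)" using h by (simp add: power2_eq_square power3_eq_cube power4_eq_xxxx algebra_simps)
  then have "M\<^sup>2 \<le> 2 * M + 1" by (rule mult_left_le_imp_le[OF _ Mp])
  then have "(M - 1)\<^sup>2 \<le> 2" by (simp add: power2_eq_square algebra_simps)
  then have "M - 1 \<le> sqrt 2" by (rule real_le_rsqrt)
  then show ?thesis by simp
qed

lemma part1:
  fixes X :: "'a::t2_space set"
  assumes ua: "uniform_algebra X A" and hom: "is_unital_hom X A n \<theta>" and cont: "is_continuous_map X A \<theta>"
    and ac: "antilinear_contraction X A \<alpha>" and na: "map_norm X A (theta_alpha \<theta> \<alpha>) \<le> 1"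
  shows "map_norm X A \<theta> \<le> 1 + sqrt 2"
proof -
  have lin: "is_linear_map A n \<theta>" using hom unfolding is_unital_hom_def by (rule conjunct1)
  have hmul: "\<forall>f\<in>A. \<forall>g\<in>A. \<theta> (\<lambda>x. f x * g x) = \<theta> f * \<theta> g"
    using hom unfolding is_unital_hom_def by (elim conjE)
  have acA: "\<forall>f\<in>A. \<alpha> f \<in> A" using ac unfolding antilinear_contraction_def by (elim conjE)
  have acN: "\<forall>f\<in>A. supnorm X (\<alpha> f) \<le> supnorm X f" using ac unfolding antilinear_contraction_def by (elim conjE)
  define M where "M = map_norm X A \<theta>"
  have bdd: "bdd_above {mat_opnorm (\<theta> f) | f. f \<in> A \<and> supnorm X f \<le> 1}"
    by (rule lin_bounded[OF ua lin cont])
  have Mup: "mat_opnorm (\<theta> f) \<le> M" if "f \<in> A" "supnorm X f \<le> 1" for f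
    unfolding M_def map_norm_def by (rule cSup_upper[OF _ bdd]) (use that in blast)
  have z: "(\<lambda>x. 0) \<in> A" by (rule ua_zero[OF ua])
  have z1: "supnorm X (\<lambda>x. 0) \<le> 1" by (rule supnorm_le) simp_all
  have M0: "0 \<le> M" using Mup[OF z z1] opnorm_nonneg[of "\<theta> (\<lambda>x. 0)"] by linarith
  have Tv: "cvec_norm (\<theta> f *\<^sub>v v) \<le> M * cvec_norm v"
    if "f \<in> A" "supnorm X f \<le> 1" "v \<in> carrier_vec n" for f v
  proof -
    have c: "\<theta> f \<in> carrier_mat n n" by (rule lin_carrier[OF lin that(1)])
    have "cvec_norm (\<theta> f *\<^sub>v v) \<le> mat_opnorm (\<theta> f) * cvec_norm v"
      by (rule opnorm_apply) (use c that(3) in simp)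
    also have "\<dots> \<le> M * cvec_norm v" by (rule mult_right_mono[OF Mup[OF that(1,2)] cvec_norm_nonneg])
    finally show ?thesis .
  qed
  have TAv: "cvec_norm (theta_alpha \<theta> \<alpha> f *\<^sub>v v) = cvec_norm ((\<theta> f + mat_adjoint (\<theta> (\<alpha> f))) *\<^sub>v v) / 2"
    if "f \<in> A" "v \<in> carrier_vec n" for f v
  proof -
    have c1: "\<theta> f \<in> carrier_mat n n" by (rule lin_carrier[OF lin that(1)])
    have c2: "mat_adjoint (\<theta> (\<alpha> f)) \<in> carrier_mat n n"
      by (rule adj_carrier[OF lin_carrier[OF lin]]) (use acA that in blast)
    have "theta_alpha \<theta> \<alpha> f *\<^sub>v v = (1/2) \<cdot>\<^sub>v ((\<theta> f + mat_adjoint (\<theta> (\<alpha> f))) *\<^sub>v v)"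
      unfolding theta_alpha_def by (rule smult_mat_vec[of _ n n]) (use c1 c2 that in simp_all)
    then show ?thesis by (simp add: cvec_norm_smult)
  qed
  have TAc: "theta_alpha \<theta> \<alpha> f \<in> carrier_mat n n" if "f \<in> A" for f
  proof -
    have c1: "\<theta> f \<in> carrier_mat n n" by (rule lin_carrier[OF lin that(1)])
    have c2: "mat_adjoint (\<theta> (\<alpha> f)) \<in> carrier_mat n n"
      by (rule adj_carrier[OF lin_carrier[OF lin]]) (use acA that in blast)
    show ?thesis unfolding theta_alpha_def using c1 c2 by simp
  qed
  have af: "\<alpha> f \<in> A" "supnorm X (\<alpha> f) \<le> 1" if "f \<in> A" "supnorm X f \<le> 1" for f
    using acA acN that by fastforce+
  have TAM: "mat_opnorm (theta_alpha \<theta> \<alpha> f) \<le> M" if "f \<in> A" "supnorm X f \<le> 1" for f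
  proof (rule opnorm_le2[OF M0])
    fix v :: "complex vec" assume v: "v \<in> carrier_vec (dim_col (theta_alpha \<theta> \<alpha> f))"
    then have v: "v \<in> carrier_vec n" using TAc[OF that(1)] by simp
    have c1: "\<theta> f \<in> carrier_mat n n" by (rule lin_carrier[OF lin that(1)])
    have c3: "\<theta> (\<alpha> f) \<in> carrier_mat n n" by (rule lin_carrier[OF lin af(1)[OF that]])
    have c2: "mat_adjoint (\<theta> (\<alpha> f)) \<in> carrier_mat n n" by (rule adj_carrier[OF c3])
    have "cvec_norm ((\<theta> f + mat_adjoint (\<theta> (\<alpha> f))) *\<^sub>v v)
        = cvec_norm (\<theta> f *\<^sub>v v + mat_adjoint (\<theta> (\<alpha> f)) *\<^sub>v v)"
      using add_mult_distrib_mat_vec[OF c1 c2 v] by simp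
    also have "\<dots> \<le> cvec_norm (\<theta> f *\<^sub>v v) + cvec_norm (mat_adjoint (\<theta> (\<alpha> f)) *\<^sub>v v)"
      by (rule cvec_norm_add) (use c1 c2 in simp)
    also have "\<dots> \<le> M * cvec_norm v + M * cvec_norm v"
      using Tv[OF that v] adj_bound[OF c3 Tv[OF af[OF that]] v M0] by linarith
    finally show "cvec_norm (theta_alpha \<theta> \<alpha> f *\<^sub>v v) \<le> M * cvec_norm v"
      using TAv[OF that(1) v] by simp
  qed
  have bddTA: "bdd_above {mat_opnorm (theta_alpha \<theta> \<alpha> f) | f. f \<in> A \<and> supnorm X f \<le> 1}"
    by (rule bdd_aboveI[of _ M]) (use TAM in blast)
  have TA1: "mat_opnorm (theta_alpha \<theta> \<alpha> f) \<le> 1" if "f \<in> A" "supnorm X f \<le> 1" for f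
  proof -
    have "mat_opnorm (theta_alpha \<theta> \<alpha> f) \<le> map_norm X A (theta_alpha \<theta> \<alpha>)"
      unfolding map_norm_def by (rule cSup_upper[OF _ bddTA]) (use that in blast)
    then show ?thesis using na by linarith
  qed
  define K where "K = 2 * M ^ 3 + M\<^sup>2"
  have K0: "0 \<le> K" unfolding K_def using M0 by simp
  have each: "mat_opnorm (\<theta> f) \<le> sqrt (sqrt K)" if f: "f \<in> A" "supnorm X f \<le> 1" for f
  proof (rule opnorm_le)
    fix x assume x: "x \<in> carrier_vec (dim_col (\<theta> f))" "cvec_norm x \<le> 1"
    have c1: "\<theta> f \<in> carrier_mat n n" by (rule lin_carrier[OF lin f(1)])
    have c3: "\<theta> (\<alpha> f) \<in> carrier_mat n n" by (rule lin_carrier[OF lin af(1)[OF f]])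
    have xn: "x \<in> carrier_vec n" using x c1 by simp
    define h where "h = (\<lambda>x. (f x * \<alpha> f x) * f x)"
    have fa: "(\<lambda>x. f x * \<alpha> f x) \<in> A" by (rule ua_mult[OF ua f(1) af(1)[OF f]])
    have hA: "h \<in> A" unfolding h_def by (rule ua_mult[OF ua fa f(1)])
    have hT: "\<theta> h = \<theta> f * \<theta> (\<alpha> f) * \<theta> f"
      unfolding h_def using hmul fa f(1) af(1)[OF f] by simp
    have h1: "supnorm X h \<le> 1"
    proof (rule supnorm_le)
      fix y assume y: "y \<in> X"
      have a1: "cmod (f y) \<le> 1" using supnorm_upper[OF ua f(1) y] f(2) by linarith
      have a2: "cmod (\<alpha> f y) \<le> 1" using supnorm_upper[OF ua af(1)[OF f] y] af(2)[OF f] by linarith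
      have "cmod (h y) = cmod (f y) * cmod (\<alpha> f y) * cmod (f y)" unfolding h_def by (simp add: norm_mult)
      also have "\<dots> \<le> 1 * 1 * 1" using a1 a2 by (intro mult_mono) auto
      finally show "cmod (h y) \<le> 1" by simp
    qed simp
    have "(cvec_norm (\<theta> f *\<^sub>v x)) ^ 4 \<le> K"
      unfolding K_def
    proof (rule key_matrix[OF c1 c3 hT])
      show "\<And>v. v \<in> carrier_vec n \<Longrightarrow> cvec_norm (\<theta> f *\<^sub>v v) \<le> M * cvec_norm v" by (rule Tv[OF f])
      show "\<And>v. v \<in> carrier_vec n \<Longrightarrow> cvec_norm (\<theta> h *\<^sub>v v) \<le> M * cvec_norm v" by (rule Tv[OF hA h1])
      show "\<And>v. v \<in> carrier_vec n \<Longrightarrow> cvec_norm ((\<theta> f + mat_adjoint (\<theta> (\<alpha> f))) *\<^sub>v v) \<le> 2 * cvec_norm v"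
      proof -
        fix v :: "complex vec" assume v: "v \<in> carrier_vec n"
        have "cvec_norm (theta_alpha \<theta> \<alpha> f *\<^sub>v v) \<le> mat_opnorm (theta_alpha \<theta> \<alpha> f) * cvec_norm v"
          by (rule opnorm_apply) (use TAc[OF f(1)] v in simp)
        also have "\<dots> \<le> 1 * cvec_norm v" by (rule mult_right_mono[OF TA1[OF f] cvec_norm_nonneg])
        finally show "cvec_norm ((\<theta> f + mat_adjoint (\<theta> (\<alpha> f))) *\<^sub>v v) \<le> 2 * cvec_norm v"
          using TAv[OF f(1) v] by simp
      qed
    qed (use M0 xn x(2) in auto)
    then have "((cvec_norm (\<theta> f *\<^sub>v x))\<^sup>2)\<^sup>2 \<le> K" by simp
    then have "(cvec_norm (\<theta> f *\<^sub>v x))\<^sup>2 \<le> sqrt K" by (rule real_le_rsqrt)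
    then show "cvec_norm (\<theta> f *\<^sub>v x) \<le> sqrt (sqrt K)" by (rule real_le_rsqrt)
  qed
  have "M \<le> sqrt (sqrt K)" unfolding M_def map_norm_def
  proof (rule cSup_least)
    show "{mat_opnorm (\<theta> f) |f. f \<in> A \<and> supnorm X f \<le> 1} \<noteq> {}" using z z1 by blast
  qed (use each in blast)
  then have "M\<^sup>2 \<le> (sqrt (sqrt K))\<^sup>2" by (rule power_mono[OF _ M0])
  then have "M\<^sup>2 \<le> sqrt K" using K0 by simp
  then have "(M\<^sup>2)\<^sup>2 \<le> (sqrt K)\<^sup>2" by (rule power_mono) simp
  then have "M ^ 4 \<le> K" using K0 by simp
  then show ?thesis unfolding M_def[symmetric] K_def by (rule final_ineq[OF M0])
qed



definition p1 :: "nat \<Rightarrow> real" where "p1 = (\<lambda>_. 0)"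
definition p2 :: "nat \<Rightarrow> real" where "p2 = (\<lambda>_. 1)"
definition ex_X :: "(nat \<Rightarrow> real) set" where "ex_X = {p1, p2}"
definition ex_A :: "((nat \<Rightarrow> real) \<Rightarrow> complex) set" where "ex_A = {f. \<forall>x. x \<notin> ex_X \<longrightarrow> f x = 0}"
definition ex_th :: "((nat \<Rightarrow> real) \<Rightarrow> complex) \<Rightarrow> complex mat" where
  "ex_th f = mat 2 2 (\<lambda>(i,j). if i = 0 then (if j = 0 then f p1 else f p1 - f p2) else (if j = 0 then 0 else f p2))"
definition ex_al :: "((nat \<Rightarrow> real) \<Rightarrow> complex) \<Rightarrow> ((nat \<Rightarrow> real) \<Rightarrow> complex)" where
  "ex_al f = (\<lambda>x. - cnj (f x))"

lemma p12: "p1 \<noteq> p2" unfolding p1_def p2_def by (metis zero_neq_one)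

lemma ex_X_fin: "finite ex_X" unfolding ex_X_def by simp

lemma ex_th_carrier: "ex_th f \<in> carrier_mat 2 2" unfolding ex_th_def by simp

lemma ex_th_idx: "ex_th f $$ (0,0) = f p1" "ex_th f $$ (0,1) = f p1 - f p2"
  "ex_th f $$ (1,0) = 0" "ex_th f $$ (1,1) = f p2"
  unfolding ex_th_def by simp_all

lemma less2: "(i::nat) < 2 \<Longrightarrow> i = 0 \<or> i = 1" by auto

lemma mat2_eqI: assumes "(A :: complex mat) \<in> carrier_mat 2 2" "B \<in> carrier_mat 2 2"
  "A $$ (0,0) = B $$ (0,0)" "A $$ (0,1) = B $$ (0,1)" "A $$ (1,0) = B $$ (1,0)" "A $$ (1,1) = B $$ (1,1)"
  shows "A = B"
proof (rule eq_matI)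
  fix i j assume "i < dim_row B" "j < dim_col B"
  then have "i = 0 \<or> i = 1" "j = 0 \<or> j = 1" using assms by auto
  then show "A $$ (i,j) = B $$ (i,j)" using assms by auto
qed (use assms in auto)

lemma mat2_mult_idx: assumes "(A :: complex mat) \<in> carrier_mat 2 2" "B \<in> carrier_mat 2 2" "i < 2" "j < 2"
  shows "(A * B) $$ (i,j) = A $$ (i,0) * B $$ (0,j) + A $$ (i,1) * B $$ (1,j)"
  using assms by (simp add: scalar_prod_def numeral_2_eq_2)

lemma mat2_vec_idx: assumes "(A :: complex mat) \<in> carrier_mat 2 2" "v \<in> carrier_vec 2" "i < 2"
  shows "(A *\<^sub>v v) $ i = A $$ (i,0) * v $ 0 + A $$ (i,1) * v $ 1"
  using assms by (simp add: scalar_prod_def numeral_2_eq_2)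

lemma cvec_norm2: assumes "(v :: complex vec) \<in> carrier_vec 2"
  shows "cvec_norm v = sqrt ((cmod (v $ 0))\<^sup>2 + (cmod (v $ 1))\<^sup>2)"
  using assms by (simp add: cvec_norm_def numeral_2_eq_2)

lemma supnorm_upper_fin: "finite X \<Longrightarrow> x \<in> X \<Longrightarrow> cmod (g x) \<le> supnorm X g"
  unfolding supnorm_def by (auto intro!: cSup_upper bdd_above_finite)

lemma ex_ua: "uniform_algebra ex_X ex_A"
  unfolding uniform_algebra_def
proof (intro conjI allI ballI impI)
  show "compact ex_X" by (rule finite_imp_compact[OF ex_X_fin])
next
  fix f assume "f \<in> ex_A" show "continuous_on ex_X f" by (rule continuous_on_finite[OF ex_X_fin])
next
  fix f x assume "f \<in> ex_A" "x \<notin> ex_X" then show "f x = 0" unfolding ex_A_def by blast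
next
  fix c show "const_on ex_X c \<in> ex_A" unfolding ex_A_def const_on_def by simp
next
  fix f g assume "f \<in> ex_A" "g \<in> ex_A" then show "(\<lambda>x. f x + g x) \<in> ex_A" unfolding ex_A_def by simp
next
  fix f g assume "f \<in> ex_A" "g \<in> ex_A" then show "(\<lambda>x. f x * g x) \<in> ex_A" unfolding ex_A_def by simp
next
  fix c f assume "f \<in> ex_A" then show "(\<lambda>x. c * f x) \<in> ex_A" unfolding ex_A_def by simp
next
  fix F g assume "(\<forall>k. F k \<in> ex_A) \<and> continuous_on ex_X g \<and> (\<forall>x. x \<notin> ex_X \<longrightarrow> g x = 0) \<and>
     (\<lambda>k. supnorm ex_X (\<lambda>x. F k x - g x)) \<longlonglongrightarrow> 0"
  then show "g \<in> ex_A" unfolding ex_A_def by blast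
qed

lemma ex_lin: "is_linear_map ex_A 2 ex_th"
  unfolding is_linear_map_def
proof (intro conjI ballI allI)
  fix f show "ex_th f \<in> carrier_mat 2 2" by (rule ex_th_carrier)
next
  fix c f g
  show "ex_th (\<lambda>x. c * f x + g x) = c \<cdot>\<^sub>m ex_th f + ex_th g"
    by (rule mat2_eqI) (simp_all add: ex_th_def algebra_simps)
qed

lemma ex_hom: "is_unital_hom ex_X ex_A 2 ex_th"
  unfolding is_unital_hom_def
proof (intro conjI ballI)
  show "is_linear_map ex_A 2 ex_th" by (rule ex_lin)
next
  fix f g
  show "ex_th (\<lambda>x. f x * g x) = ex_th f * ex_th g"
    by (rule mat2_eqI) (simp_all add: ex_th_carrier mat2_mult_idx mult_carrier_mat[OF ex_th_carrier ex_th_carrier], simp_all add: ex_th_def algebra_simps)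
next
  show "ex_th (const_on ex_X 1) = 1\<^sub>m 2"
    by (rule mat2_eqI) (simp_all add: ex_th_def const_on_def ex_X_def)
qed

lemma ex_th_bound: assumes "\<And>x. x \<in> ex_X \<Longrightarrow> cmod (g x) \<le> s" "0 \<le> s"
  shows "mat_opnorm (ex_th g) \<le> 4 * s"
proof (rule opnorm_le2)
  show "0 \<le> 4 * s" using assms by simp
next
  fix v :: "complex vec" assume v: "v \<in> carrier_vec (dim_col (ex_th g))"
  then have v2: "v \<in> carrier_vec 2" using ex_th_carrier[of g] by simp
  have "cvec_norm (ex_th g *\<^sub>v v) \<le> (\<Sum>i<2. \<Sum>j<2. cmod (ex_th g $$ (i,j))) * cvec_norm v"
    by (rule mat_vec_bound[OF ex_th_carrier v2])
  also have "(\<Sum>i<2. \<Sum>j<2. cmod (ex_th g $$ (i,j))) = cmod (g p1) + cmod (g p1 - g p2) + cmod (g p2)"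
    by (simp add: numeral_2_eq_2 ex_th_def)
  also have "\<dots> \<le> 4 * s"
  proof -
    have a: "cmod (g p1) \<le> s" "cmod (g p2) \<le> s" using assms(1) unfolding ex_X_def by auto
    have "cmod (g p1 - g p2) \<le> cmod (g p1) + cmod (g p2)" by (rule norm_triangle_ineq4)
    then show ?thesis using a assms(2) by linarith
  qed
  finally show "cvec_norm (ex_th g *\<^sub>v v) \<le> 4 * s * cvec_norm v"
    using mult_right_mono cvec_norm_nonneg by blast
qed

lemma ex_cont: "is_continuous_map ex_X ex_A ex_th"
  unfolding is_continuous_map_def
proof (intro ballI allI impI)
  fix f F assume H: "(\<forall>k. F k \<in> ex_A) \<and> (\<lambda>k. supnorm ex_X (\<lambda>x. F k x - f x)) \<longlonglongrightarrow> 0"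
  define s where "s k = supnorm ex_X (\<lambda>x. F k x - f x)" for k
  have s0: "0 \<le> s k" for k
  proof -
    have "0 \<le> cmod (F k p1 - f p1)" by simp
    also have "\<dots> \<le> s k" unfolding s_def by (rule supnorm_upper_fin[OF ex_X_fin]) (simp add: ex_X_def)
    finally show ?thesis .
  qed
  have b: "mat_opnorm (ex_th (F k) - ex_th f) \<le> 4 * s k" for k
  proof -
    have "ex_th (F k) - ex_th f = ex_th (\<lambda>x. F k x - f x)"
      by (rule mat2_eqI) (simp_all add: ex_th_carrier minus_carrier_mat[OF ex_th_carrier], simp_all add: ex_th_def)
    also have "mat_opnorm \<dots> \<le> 4 * s k"
      by (rule ex_th_bound[OF _ s0]) (unfold s_def, rule supnorm_upper_fin[OF ex_X_fin])
    finally show ?thesis .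
  qed
  have "(\<lambda>k. 4 * s k) \<longlonglongrightarrow> 0" using H unfolding s_def by (intro tendsto_mult_right_zero) simp
  then show "(\<lambda>k. mat_opnorm (ex_th (F k) - ex_th f)) \<longlonglongrightarrow> 0"
    by (rule tendsto_sandwich[rotated 2, OF tendsto_const]) (use b opnorm_nonneg in auto)
qed

lemma ex_ac: "antilinear_contraction ex_X ex_A ex_al"
  unfolding antilinear_contraction_def
proof (intro conjI ballI allI)
  fix f assume "f \<in> ex_A" then show "ex_al f \<in> ex_A" unfolding ex_A_def ex_al_def by simp
next
  fix c f g show "ex_al (\<lambda>x. c * f x + g x) = (\<lambda>x. cnj c * ex_al f x + ex_al g x)"
    unfolding ex_al_def by (simp add: fun_eq_iff algebra_simps)
next
  fix f show "supnorm ex_X (ex_al f) \<le> supnorm ex_X f"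
    unfolding supnorm_def ex_al_def by simp
qed



lemma ex_ta_idx: assumes "i < 2" "j < 2"
  shows "theta_alpha ex_th ex_al f $$ (i,j) = (1/2) * (ex_th f $$ (i,j) + cnj (ex_th (ex_al f) $$ (j,i)))"
proof -
  have c: "mat_adjoint (ex_th (ex_al f)) \<in> carrier_mat 2 2" by (rule adj_carrier[OF ex_th_carrier])
  show ?thesis unfolding theta_alpha_def
    using assms c ex_th_carrier[of f] adj_index[OF ex_th_carrier, of i j] by simp
qed

lemma ex_ta_carrier: "theta_alpha ex_th ex_al f \<in> carrier_mat 2 2"
  unfolding theta_alpha_def using adj_carrier[OF ex_th_carrier] ex_th_carrier by simp

lemma ex_ta_bound: assumes f1: "supnorm ex_X f \<le> 1"
  shows "mat_opnorm (theta_alpha ex_th ex_al f) \<le> 1"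
proof (rule opnorm_le2)
  fix v :: "complex vec" assume "v \<in> carrier_vec (dim_col (theta_alpha ex_th ex_al f))"
  then have v: "v \<in> carrier_vec 2" using ex_ta_carrier[of f] by simp
  define d where "d = (f p1 - f p2) / 2"
  have a1: "cmod (f p1) \<le> 1" using supnorm_upper_fin[OF ex_X_fin, of p1 f] f1 by (simp add: ex_X_def)
  have a2: "cmod (f p2) \<le> 1" using supnorm_upper_fin[OF ex_X_fin, of p2 f] f1 by (simp add: ex_X_def)
  have "cmod (f p1 - f p2) \<le> cmod (f p1) + cmod (f p2)" by (rule norm_triangle_ineq4)
  then have d1: "cmod d \<le> 1" unfolding d_def using a1 a2 by (simp add: norm_divide)
  have e00: "theta_alpha ex_th ex_al f $$ (0,0) = 0" by (simp add: ex_ta_idx ex_th_def ex_al_def)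
  have e01: "theta_alpha ex_th ex_al f $$ (0,1) = d" by (simp add: ex_ta_idx ex_th_def ex_al_def d_def)
  have e10: "theta_alpha ex_th ex_al f $$ (1,0) = - d" by (simp add: ex_ta_idx ex_th_def ex_al_def d_def field_simps)
  have e11: "theta_alpha ex_th ex_al f $$ (1,1) = 0" by (simp add: ex_ta_idx ex_th_def ex_al_def)
  have w0: "(theta_alpha ex_th ex_al f *\<^sub>v v) $ 0 = d * v $ 1"
    using mat2_vec_idx[OF ex_ta_carrier v, of 0] e00 e01 by simp
  have w1: "(theta_alpha ex_th ex_al f *\<^sub>v v) $ 1 = - d * v $ 0"
    using mat2_vec_idx[OF ex_ta_carrier v, of 1] e10 e11 by simp
  have wc: "theta_alpha ex_th ex_al f *\<^sub>v v \<in> carrier_vec 2" using ex_ta_carrier[of f] v by simp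
  have "cvec_norm (theta_alpha ex_th ex_al f *\<^sub>v v) = sqrt ((cmod d)\<^sup>2 * ((cmod (v $ 0))\<^sup>2 + (cmod (v $ 1))\<^sup>2))"
    unfolding cvec_norm2[OF wc] w0 w1 by (simp add: norm_mult power_mult_distrib algebra_simps)
  also have "\<dots> \<le> sqrt (1 * ((cmod (v $ 0))\<^sup>2 + (cmod (v $ 1))\<^sup>2))"
  proof (rule real_sqrt_le_mono, rule mult_right_mono)
    show "(cmod d)\<^sup>2 \<le> 1" using d1 by (simp add: power_le_one)
  qed simp
  also have "\<dots> = 1 * cvec_norm v" using cvec_norm2[OF v] by simp
  finally show "cvec_norm (theta_alpha ex_th ex_al f *\<^sub>v v) \<le> 1 * cvec_norm v" .
qed simp

definition f0 :: "(nat \<Rightarrow> real) \<Rightarrow> complex" where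
  "f0 = (\<lambda>x. if x = p1 then 1 else if x = p2 then -1 else 0)"

lemma f0A: "f0 \<in> ex_A" unfolding f0_def ex_A_def ex_X_def by auto

lemma f01: "supnorm ex_X f0 \<le> 1"
  by (rule supnorm_le) (auto simp: f0_def ex_X_def)

lemma ex_big: "1 + sqrt 2 \<le> mat_opnorm (ex_th f0)"
proof -
  define r where "r = 1 + sqrt 2"
  have r0: "0 < r" unfolding r_def by (simp add: add_pos_nonneg)
  define v where "v = vec 2 (\<lambda>i. if i = 0 then 1 else complex_of_real r)"
  have v: "v \<in> carrier_vec 2" unfolding v_def by simp
  have v0: "v $ 0 = 1" and v1: "v $ 1 = complex_of_real r" unfolding v_def by simp_all
  have fp: "f0 p1 = 1" "f0 p2 = -1" using p12 unfolding f0_def by auto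
  define M where "M = ex_th f0"
  have M: "M \<in> carrier_mat 2 2" unfolding M_def by (rule ex_th_carrier)
  have m00: "M $$ (0,0) = 1" "M $$ (0,1) = 2" "M $$ (1,0) = 0" "M $$ (1,1) = -1"
    unfolding M_def by (simp_all add: ex_th_def fp)
  have w0: "(M *\<^sub>v v) $ 0 = complex_of_real (1 + 2 * r)"
    using mat2_vec_idx[OF M v, of 0] m00 v0 v1 by simp
  have w1: "(M *\<^sub>v v) $ 1 = - complex_of_real r"
    using mat2_vec_idx[OF M v, of 1] m00 v0 v1 by simp
  have wc: "M *\<^sub>v v \<in> carrier_vec 2" using M v by simp
  have nv: "cvec_norm v = sqrt (1 + r\<^sup>2)" unfolding cvec_norm2[OF v] v0 v1 using r0 by simp
  have c0: "cmod ((M *\<^sub>v v) $ 0) = 1 + 2 * r" unfolding w0 norm_of_real using r0 by simp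
  have c1: "cmod ((M *\<^sub>v v) $ 1) = r" unfolding w1 norm_minus_cancel norm_of_real using r0 by simp
  have nw: "cvec_norm (M *\<^sub>v v) = sqrt ((1 + 2 * r)\<^sup>2 + r\<^sup>2)" unfolding cvec_norm2[OF wc] c0 c1 ..
  have s2: "sqrt 2 * sqrt 2 = 2" by simp
  have "(1 + 2 * r)\<^sup>2 + r\<^sup>2 = r\<^sup>2 * (1 + r\<^sup>2)"
    unfolding r_def power2_eq_square by (simp add: algebra_simps s2)
  then have "cvec_norm (M *\<^sub>v v) = r * cvec_norm v"
    unfolding nw nv using r0 by (simp add: real_sqrt_mult)
  moreover have "cvec_norm (M *\<^sub>v v) \<le> mat_opnorm M * cvec_norm v"
    by (rule opnorm_apply) (use M v in simp)
  moreover have "0 < cvec_norm v" unfolding nv by (simp add: add_pos_nonneg)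
  ultimately have "r \<le> mat_opnorm M" by simp
  then show ?thesis unfolding r_def M_def .
qed



lemma part2: assumes c: "c < 1 + sqrt 2"
  shows "\<exists>(X :: (nat \<Rightarrow> real) set) A n \<theta> \<alpha>.
            uniform_algebra X A \<and> is_unital_hom X A n \<theta> \<and> is_continuous_map X A \<theta> \<and>
            antilinear_contraction X A \<alpha> \<and> map_norm X A (theta_alpha \<theta> \<alpha>) \<le> 1 \<and>
            map_norm X A \<theta> > c"
proof (intro exI conjI)
  show "uniform_algebra ex_X ex_A" by (rule ex_ua)
  show "is_unital_hom ex_X ex_A 2 ex_th" by (rule ex_hom)
  show "is_continuous_map ex_X ex_A ex_th" by (rule ex_cont)
  show "antilinear_contraction ex_X ex_A ex_al" by (rule ex_ac)
  have z: "(\<lambda>x. 0) \<in> ex_A" by (rule ua_zero[OF ex_ua])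
  have z1: "supnorm ex_X (\<lambda>x. 0) \<le> 1" by (rule supnorm_le) simp_all
  show "map_norm ex_X ex_A (theta_alpha ex_th ex_al) \<le> 1"
    unfolding map_norm_def
  proof (rule cSup_least)
    show "{mat_opnorm (theta_alpha ex_th ex_al f) |f. f \<in> ex_A \<and> supnorm ex_X f \<le> 1} \<noteq> {}"
      using z z1 by blast
  qed (use ex_ta_bound in blast)
  have "mat_opnorm (ex_th f0) \<le> map_norm ex_X ex_A ex_th"
    unfolding map_norm_def
    by (rule cSup_upper[OF _ lin_bounded[OF ex_ua ex_lin ex_cont]]) (use f0A f01 in blast)
  then show "c < map_norm ex_X ex_A ex_th" using ex_big c by linarith
qed

theorem theorem1p1:
  shows "(\<forall>(X :: 'a::t2_space set) A n \<theta> \<alpha>.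
            uniform_algebra X A \<and> is_unital_hom X A n \<theta> \<and> is_continuous_map X A \<theta> \<and>
            antilinear_contraction X A \<alpha> \<and> map_norm X A (theta_alpha \<theta> \<alpha>) \<le> 1
            \<longrightarrow> map_norm X A \<theta> \<le> 1 + sqrt 2)
       \<and> (\<forall>c < 1 + sqrt 2. \<exists>(X :: (nat \<Rightarrow> real) set) A n \<theta> \<alpha>.
            uniform_algebra X A \<and> is_unital_hom X A n \<theta> \<and> is_continuous_map X A \<theta> \<and>
            antilinear_contraction X A \<alpha> \<and> map_norm X A (theta_alpha \<theta> \<alpha>) \<le> 1 \<and>
            map_norm X A \<theta> > c)"
  using part1 part2 by blast


end
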